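(* Let $k,l,m,n$ be positive integers with $k^n\equiv 1\pmod m$ and $l(k-1)\equiv0\pmod m$, let $G=\langle a,b;\ a^m=1,\ b^n=a^l,\ b^{-1}ab=a^k\rangle$, and let $R=\{k^j-1 \bmod m: j\in\mathbb{Z}_n\}$ and $L=\{1-k^j \bmod m: j\in\mathbb{Z}_n\}$. Then (i) $0\in R$ and $0\in L$; and (ii) if $n=\mathrm{ind}_m(k)$, the following are equivalent: (a) the centre of $G$ is trivial; (b) $R$ contains an element invertible in $\mathbb{Z}_m$; (c) $L$ contains an element invertible in $\mathbb{Z}_m$.
   Context: $\mathrm{ind}_m(k)$ is the least positive integer $d$ with $k^d\equiv 1\pmod m$. *)

theory Defs
  imports "HOL-Algebra.Generated_Groups" "HOL-Number_Theory.Cong"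
begin

definition ind :: "nat \<Rightarrow> nat \<Rightarrow> nat" where
  "ind m k = (LEAST d. d > 0 \<and> [k ^ d = 1] (mod m))"

definition mc_rels :: "('g, 'c) monoid_scheme \<Rightarrow> 'g \<Rightarrow> 'g \<Rightarrow> nat \<Rightarrow> nat \<Rightarrow> nat \<Rightarrow> nat \<Rightarrow> bool" where
  "mc_rels H x y k l m n \<longleftrightarrow>
     x \<in> carrier H \<and> y \<in> carrier H \<and>
     x [^]\<^bsub>H\<^esub> m = \<one>\<^bsub>H\<^esub> \<and>
     y [^]\<^bsub>H\<^esub> n = x [^]\<^bsub>H\<^esub> l \<and>
     inv\<^bsub>H\<^esub> y \<otimes>\<^bsub>H\<^esub> x \<otimes>\<^bsub>H\<^esub> y = x [^]\<^bsub>H\<^esub> k"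

text \<open>Test groups H are taken on the
  type nat; this suffices since the subgroup generated by two elements is countable.\<close>
definition presents_mc :: "('g, 'c) monoid_scheme \<Rightarrow> 'g \<Rightarrow> 'g \<Rightarrow> nat \<Rightarrow> nat \<Rightarrow> nat \<Rightarrow> nat \<Rightarrow> bool" where
  "presents_mc G a b k l m n \<longleftrightarrow>
     group G \<and> mc_rels G a b k l m n \<and> carrier G = generate G {a, b} \<and>
     (\<forall>(H :: nat monoid) x y. group H \<and> mc_rels H x y k l m n \<longrightarrow>
        (\<exists>h \<in> hom G H. h a = x \<and> h b = y))"

definition center :: "('g, 'c) monoid_scheme \<Rightarrow> 'g set" where
  "center G = {z \<in> carrier G. \<forall>g \<in> carrier G. z \<otimes>\<^bsub>G\<^esub> g = g \<otimes>\<^bsub>G\<^esub> z}"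

end

theory Submission
  imports Defs "HOL-Library.Nat_Bijection"
begin

definition Hmul :: "nat \<Rightarrow> nat \<Rightarrow> nat \<Rightarrow> nat \<Rightarrow> nat \<times> nat \<Rightarrow> nat \<times> nat \<Rightarrow> nat \<times> nat" where
  "Hmul k l m n p q = ((fst p + fst q) mod n,
     (snd p * k ^ fst q + snd q + (if n \<le> fst p + fst q then l else 0)) mod m)"

definition Hgrp :: "nat \<Rightarrow> nat \<Rightarrow> nat \<Rightarrow> nat \<Rightarrow> nat monoid" where
  "Hgrp k l m n = \<lparr>carrier = prod_encode ` {p. fst p < n \<and> snd p < m},
     monoid.mult = (\<lambda>x y. prod_encode (Hmul k l m n (prod_decode x) (prod_decode y))),
     one = prod_encode (0, 0)\<rparr>"

lemma carry_eq:
  fixes j1 j2 n l :: nat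
  assumes "j1 < n" "j2 < n"
  shows "(if n \<le> j1 + j2 then l else 0) = l * ((j1 + j2) div n)"
proof (cases "n \<le> j1 + j2")
  case True
  have "j1 + j2 - n < n" using assms by linarith
  then have "(j1 + j2) div n = 1" using True le_div_geq[of n "j1 + j2"] assms by simp
  then show ?thesis using True by simp
next
  case False then show ?thesis by simp
qed

lemma lk_pow:
  fixes k l m :: nat
  assumes "[l * k = l] (mod m)"
  shows "[l * k ^ j = l] (mod m)"
proof (induction j)
  case 0 then show ?case by simp
next
  case (Suc j)
  have "[l * k ^ Suc j = (l * k ^ j) * k] (mod m)" unfolding power_Suc2 mult.assoc by (rule cong_refl)
  also have "[(l * k ^ j) * k = l * k] (mod m)" by (rule cong_mult[OF Suc cong_refl])
  also have "[l * k = l] (mod m)" by (fact assms)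
  finally show ?case .
qed

lemma kpow_mod:
  fixes k m n :: nat
  assumes "[k ^ n = 1] (mod m)"
  shows "[k ^ (j mod n) = k ^ j] (mod m)"
proof -
  have "k ^ j = k ^ (n * (j div n) + j mod n)" by simp
  also have "\<dots> = (k ^ n) ^ (j div n) * k ^ (j mod n)" by (simp only: power_add power_mult)
  finally have "k ^ j = (k ^ n) ^ (j div n) * k ^ (j mod n)" .
  moreover have "[(k ^ n) ^ (j div n) * k ^ (j mod n) = 1 ^ (j div n) * k ^ (j mod n)] (mod m)"
    using assms by (intro cong_mult cong_pow) auto
  ultimately show ?thesis by (simp add: cong_sym)
qed

lemma Hmul_assoc:
  fixes k l m n :: nat
  assumes "n > 0" "[k ^ n = 1] (mod m)" "[l * k = l] (mod m)"
    and "fst p1 < n" "fst p2 < n" "fst p3 < n"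
  shows "Hmul k l m n (Hmul k l m n p1 p2) p3 = Hmul k l m n p1 (Hmul k l m n p2 p3)"
proof -
  obtain j1 i1 j2 i2 j3 i3 where P: "p1 = (j1, i1)" "p2 = (j2, i2)" "p3 = (j3, i3)"
    by (metis prod.collapse)
  have j: "j1 < n" "j2 < n" "j3 < n" using assms P by auto
  define T where "T = (i1 * k ^ (j2 + j3) + i2 * k ^ j3 + i3 + l * ((j1 + j2 + j3) div n)) mod m"
  have c1: "(if n \<le> j1 + j2 then l else 0) = l * ((j1 + j2) div n)" using carry_eq j by blast
  have c2: "(if n \<le> (j1 + j2) mod n + j3 then l else 0) = l * (((j1 + j2) mod n + j3) div n)"
    using carry_eq j assms(1) by simp
  have c3: "(if n \<le> j2 + j3 then l else 0) = l * ((j2 + j3) div n)" using carry_eq j by blast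
  have c4: "(if n \<le> j1 + (j2 + j3) mod n then l else 0) = l * ((j1 + (j2 + j3) mod n) div n)"
    using carry_eq j assms(1) by simp
  have d1: "(j1 + j2) div n + ((j1 + j2) mod n + j3) div n = (j1 + j2 + j3) div n"
    using j div_add1_eq[of "j1+j2" j3 n] by simp
  have d2: "(j2 + j3) div n + (j1 + (j2 + j3) mod n) div n = (j1 + j2 + j3) div n"
    using j div_add1_eq[of j1 "j2+j3" n] by (simp add: add.assoc)
  have L: "((i1 * k ^ j2 + i2 + l * ((j1 + j2) div n)) mod m * k ^ j3 + i3
            + l * (((j1 + j2) mod n + j3) div n)) mod m = T"
  proof -
    have "[(i1 * k ^ j2 + i2 + l * ((j1 + j2) div n)) mod m * k ^ j3 + i3
            + l * (((j1 + j2) mod n + j3) div n)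
          = i1 * k ^ (j2 + j3) + i2 * k ^ j3 + (l * k ^ j3) * ((j1 + j2) div n) + i3
            + l * (((j1 + j2) mod n + j3) div n)] (mod m)"
      proof -
        have "[(i1 * k ^ j2 + i2 + l * ((j1 + j2) div n)) mod m * k ^ j3
              = (i1 * k ^ j2 + i2 + l * ((j1 + j2) div n)) * k ^ j3] (mod m)"
          by (simp add: cong_def mod_mult_left_eq)
        then have "[(i1 * k ^ j2 + i2 + l * ((j1 + j2) div n)) mod m * k ^ j3 + i3
            + l * (((j1 + j2) mod n + j3) div n)
              = (i1 * k ^ j2 + i2 + l * ((j1 + j2) div n)) * k ^ j3 + i3
            + l * (((j1 + j2) mod n + j3) div n)] (mod m)"
          by (intro cong_add) auto
        also have "(i1 * k ^ j2 + i2 + l * ((j1 + j2) div n)) * k ^ j3 + i3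
            + l * (((j1 + j2) mod n + j3) div n)
          = i1 * k ^ (j2 + j3) + i2 * k ^ j3 + (l * k ^ j3) * ((j1 + j2) div n) + i3
            + l * (((j1 + j2) mod n + j3) div n)"
          by (simp add: algebra_simps power_add)
        finally show ?thesis .
      qed
    also have "[i1 * k ^ (j2 + j3) + i2 * k ^ j3 + (l * k ^ j3) * ((j1 + j2) div n) + i3
            + l * (((j1 + j2) mod n + j3) div n)
          = i1 * k ^ (j2 + j3) + i2 * k ^ j3 + l * ((j1 + j2) div n) + i3
            + l * (((j1 + j2) mod n + j3) div n)] (mod m)"
      using lk_pow[OF assms(3), of j3] by (intro cong_add cong_mult) auto
    also have "i1 * k ^ (j2 + j3) + i2 * k ^ j3 + l * ((j1 + j2) div n) + i3
            + l * (((j1 + j2) mod n + j3) div n)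
          = i1 * k ^ (j2 + j3) + i2 * k ^ j3 + i3 + l * ((j1 + j2 + j3) div n)"
      using d1 by (simp add: algebra_simps flip: distrib_left)
    finally show ?thesis unfolding T_def cong_def .
  qed
  have R: "(i1 * k ^ ((j2 + j3) mod n) + (i2 * k ^ j3 + i3 + l * ((j2 + j3) div n)) mod m
            + l * ((j1 + (j2 + j3) mod n) div n)) mod m = T"
  proof -
    have "[i1 * k ^ ((j2 + j3) mod n) + (i2 * k ^ j3 + i3 + l * ((j2 + j3) div n)) mod m
            + l * ((j1 + (j2 + j3) mod n) div n)
         = i1 * k ^ (j2 + j3) + (i2 * k ^ j3 + i3 + l * ((j2 + j3) div n))
            + l * ((j1 + (j2 + j3) mod n) div n)] (mod m)"
      using kpow_mod[OF assms(2), of "j2+j3"]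
      by (intro cong_add cong_mult) (auto simp: cong_def)
    also have "i1 * k ^ (j2 + j3) + (i2 * k ^ j3 + i3 + l * ((j2 + j3) div n))
            + l * ((j1 + (j2 + j3) mod n) div n)
          = i1 * k ^ (j2 + j3) + i2 * k ^ j3 + i3 + l * ((j1 + j2 + j3) div n)"
      using d2 by (simp add: algebra_simps flip: distrib_left)
    finally show ?thesis unfolding T_def cong_def .
  qed
  have e1: "Hmul k l m n p1 p2 = ((j1 + j2) mod n, (i1 * k ^ j2 + i2 + l * ((j1 + j2) div n)) mod m)"
    unfolding P Hmul_def fst_conv snd_conv c1 by (rule refl)
  have e2: "Hmul k l m n p2 p3 = ((j2 + j3) mod n, (i2 * k ^ j3 + i3 + l * ((j2 + j3) div n)) mod m)"
    unfolding P Hmul_def fst_conv snd_conv c3 by (rule refl)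
  have f: "((j1 + j2) mod n + j3) mod n = (j1 + (j2 + j3) mod n) mod n"
    by (simp add: mod_add_left_eq mod_add_right_eq add.assoc)
  have A: "Hmul k l m n (Hmul k l m n p1 p2) p3 = (((j1 + j2) mod n + j3) mod n, T)"
    unfolding e1 unfolding P Hmul_def fst_conv snd_conv c2 L by (rule refl)
  have B: "Hmul k l m n p1 (Hmul k l m n p2 p3) = ((j1 + (j2 + j3) mod n) mod n, T)"
    unfolding e2 unfolding P Hmul_def fst_conv snd_conv c4 R by (rule refl)
  show ?thesis unfolding A B f by (rule refl)
qed


lemma Hmul_closed:
  assumes "n > 0" "m > 0"
  shows "fst (Hmul k l m n p q) < n \<and> snd (Hmul k l m n p q) < m"
  using assms by (simp add: Hmul_def)

lemma Hmul_one: "fst p < n \<Longrightarrow> snd p < m \<Longrightarrow> Hmul k l m n (0, 0) p = p"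
  by (cases p) (simp add: Hmul_def)

lemma Hmul_linv:
  fixes k l m n :: nat
  assumes "n > 0" "m > 0" "[k ^ n = 1] (mod m)" "fst p < n" "snd p < m"
  shows "\<exists>q. fst q < n \<and> snd q < m \<and> Hmul k l m n q p = (0, 0)"
proof -
  obtain j i where P: "p = (j, i)" by (cases p)
  show ?thesis
  proof (cases "j = 0")
    case True
    have im: "i < m" using assms P by simp
    have "((m - i) mod m + i) mod m = ((m - i) + i) mod m" by (simp add: mod_add_left_eq)
    also have "\<dots> = 0" using im by simp
    finally have "((m - i) mod m + i) mod m = 0" .
    then show ?thesis using True P assms
      by (intro exI[of _ "(0, (m - i) mod m)"]) (simp add: Hmul_def)
  next
    case False
    define c where "c = (m - (i + l) mod m)"
    have jn: "j < n" using assms P by simp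
    have "[(c * k ^ (n - j)) mod m * k ^ j + i + l = c * k ^ n + (i + l)] (mod m)"
    proof -
      have "[(c * k ^ (n - j)) mod m * k ^ j = c * k ^ (n - j) * k ^ j] (mod m)"
        by (simp add: cong_def mod_mult_left_eq)
      also have "c * k ^ (n - j) * k ^ j = c * k ^ n" using jn
        by (simp add: mult.assoc flip: power_add)
      finally show ?thesis by (simp add: add.assoc cong_add)
    qed
    also have "[c * k ^ n + (i + l) = c * 1 + (i + l)] (mod m)"
      using assms(3) by (intro cong_add cong_mult) auto
    also have "[c * 1 + (i + l) = 0] (mod m)"
    proof -
      have "c + (i + l) mod m = m" unfolding c_def using assms(2) by simp
      then show ?thesis unfolding cong_def
        by (metis mod_add_right_eq mod_self mult_1_right mod_0)
    qed
    finally have e: "((c * k ^ (n - j)) mod m * k ^ j + i + l) mod m = 0"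
      by (simp add: cong_def)
    show ?thesis using False P assms e jn
      by (intro exI[of _ "(n - j, (c * k ^ (n - j)) mod m)"]) (simp add: Hmul_def)
  qed
qed

lemma Hgrp_group:
  fixes k l m n :: nat
  assumes "n > 0" "m > 0" "[k ^ n = 1] (mod m)" "[l * k = l] (mod m)"
  shows "group (Hgrp k l m n)"
proof (rule groupI)
  show "\<And>x y. x \<in> carrier (Hgrp k l m n) \<Longrightarrow> y \<in> carrier (Hgrp k l m n) \<Longrightarrow>
        x \<otimes>\<^bsub>Hgrp k l m n\<^esub> y \<in> carrier (Hgrp k l m n)"
    using Hmul_closed[OF assms(1,2)] by (auto simp: Hgrp_def)
  show "\<one>\<^bsub>Hgrp k l m n\<^esub> \<in> carrier (Hgrp k l m n)"
    using assms by (auto simp: Hgrp_def)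
  show "\<And>x y z. x \<in> carrier (Hgrp k l m n) \<Longrightarrow> y \<in> carrier (Hgrp k l m n) \<Longrightarrow>
        z \<in> carrier (Hgrp k l m n) \<Longrightarrow>
        x \<otimes>\<^bsub>Hgrp k l m n\<^esub> y \<otimes>\<^bsub>Hgrp k l m n\<^esub> z =
        x \<otimes>\<^bsub>Hgrp k l m n\<^esub> (y \<otimes>\<^bsub>Hgrp k l m n\<^esub> z)"
    using Hmul_assoc[OF assms(1,3,4)] by (auto simp: Hgrp_def)
  show "\<And>x. x \<in> carrier (Hgrp k l m n) \<Longrightarrow> \<one>\<^bsub>Hgrp k l m n\<^esub> \<otimes>\<^bsub>Hgrp k l m n\<^esub> x = x"
    using Hmul_one by (auto simp: Hgrp_def)
  show "\<And>x. x \<in> carrier (Hgrp k l m n) \<Longrightarrow>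
        \<exists>y\<in>carrier (Hgrp k l m n). y \<otimes>\<^bsub>Hgrp k l m n\<^esub> x = \<one>\<^bsub>Hgrp k l m n\<^esub>"
  proof -
    fix x assume "x \<in> carrier (Hgrp k l m n)"
    then obtain p where p: "x = prod_encode p" "fst p < n" "snd p < m" by (auto simp: Hgrp_def)
    obtain q where "fst q < n" "snd q < m" "Hmul k l m n q p = (0, 0)"
      using Hmul_linv[OF assms(1,2,3) p(2,3)] by blast
    then show "\<exists>y\<in>carrier (Hgrp k l m n). y \<otimes>\<^bsub>Hgrp k l m n\<^esub> x = \<one>\<^bsub>Hgrp k l m n\<^esub>"
      using p by (intro bexI[of _ "prod_encode q"]) (auto simp: Hgrp_def)
  qed
qed


lemma Hx_pow:
  assumes "n > 0"
  shows "(prod_encode (0, 1 mod m)) [^]\<^bsub>Hgrp k l m n\<^esub> (t::nat) = prod_encode (0, t mod m)"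
proof (induction t)
  case 0 then show ?case by (simp add: Hgrp_def)
next
  case (Suc t) then show ?case using assms by (simp add: Hgrp_def Hmul_def mod_simps mod_Suc_eq)
qed

lemma Hy_pow:
  assumes "2 \<le> n" "t < n"
  shows "(prod_encode (1, 0)) [^]\<^bsub>Hgrp k l m n\<^esub> (t::nat) = prod_encode (t, 0)"
  using assms(2)
proof (induction t)
  case 0 then show ?case by (simp add: Hgrp_def)
next
  case (Suc t) then show ?case using assms by (simp add: Hgrp_def Hmul_def)
qed

lemma Hy_pow_n:
  assumes "2 \<le> n"
  shows "(prod_encode (1, 0)) [^]\<^bsub>Hgrp k l m n\<^esub> n = prod_encode (0, l mod m)"
proof -
  obtain t where t: "n = Suc t" using assms by (cases n) auto
  have "(prod_encode (1, 0)) [^]\<^bsub>Hgrp k l m n\<^esub> t = prod_encode (t, 0)"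
    using Hy_pow[OF assms] t by simp
  then show ?thesis using t by (simp add: Hgrp_def Hmul_def)
qed

lemma H_model:
  fixes k l m n :: nat
  assumes "n > 0" "m > 0" "[k ^ n = 1] (mod m)" "[l * k = l] (mod m)"
  defines "x \<equiv> prod_encode (0, 1 mod m)"
    and "y \<equiv> prod_encode (if n = 1 then (0, l mod m) else (1, 0))"
  shows "group (Hgrp k l m n) \<and> mc_rels (Hgrp k l m n) x y k l m n \<and>
         (\<forall>t. 0 < t \<and> t < m \<longrightarrow> x [^]\<^bsub>Hgrp k l m n\<^esub> t \<noteq> \<one>\<^bsub>Hgrp k l m n\<^esub>)"
proof -
  let ?H = "Hgrp k l m n"
  have grp: "group ?H" using Hgrp_group[OF assms(1-4)] .
  interpret H: group ?H by (fact grp)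
  have xc: "x \<in> carrier ?H" using assms unfolding x_def by (auto simp: Hgrp_def)
  have yc: "y \<in> carrier ?H" using assms unfolding y_def by (auto simp: Hgrp_def)
  have xp: "\<And>t. x [^]\<^bsub>?H\<^esub> (t::nat) = prod_encode (0, t mod m)"
    unfolding x_def using assms(1) by (rule Hx_pow)
  have r1: "x [^]\<^bsub>?H\<^esub> m = \<one>\<^bsub>?H\<^esub>" using xp by (simp add: Hgrp_def)
  have r2: "y [^]\<^bsub>?H\<^esub> n = x [^]\<^bsub>?H\<^esub> l"
  proof (cases "n = 1")
    case True then show ?thesis using xp assms(2) unfolding y_def by (simp add: Hgrp_def Hmul_def)
  next
    case False then show ?thesis using xp Hy_pow_n[of n k l m] assms(1) unfolding y_def by simp
  qed
  have comm: "x \<otimes>\<^bsub>?H\<^esub> y = y \<otimes>\<^bsub>?H\<^esub> x [^]\<^bsub>?H\<^esub> k"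
  proof (cases "n = 1")
    case True
    then have "[k ^ 1 = 1] (mod m)" using assms(3) by simp
    then have "k mod m = 1 mod m" by (simp add: cong_def)
    then show ?thesis using True xp unfolding x_def y_def
      by (simp add: Hgrp_def Hmul_def add.commute)
  next
    case False
    then show ?thesis using xp assms(1) unfolding x_def y_def
      by (simp add: Hgrp_def Hmul_def mod_simps)
  qed
  have r3: "inv\<^bsub>?H\<^esub> y \<otimes>\<^bsub>?H\<^esub> x \<otimes>\<^bsub>?H\<^esub> y = x [^]\<^bsub>?H\<^esub> k"
    using comm xc yc by (simp add: H.m_assoc H.l_inv flip: H.m_assoc[of "inv\<^bsub>?H\<^esub> y" y])
  have ord: "\<forall>t. 0 < t \<and> t < m \<longrightarrow> x [^]\<^bsub>?H\<^esub> t \<noteq> \<one>\<^bsub>?H\<^esub>"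
    using xp by (auto simp: Hgrp_def)
  show ?thesis using grp xc yc r1 r2 r3 ord unfolding mc_rels_def by blast
qed


context group
begin

lemma pow_mod_m:
  assumes "a \<in> carrier G" "a [^] (m::nat) = \<one>"
  shows "a [^] (t::nat) = a [^] (t mod m)"
proof -
  have "a [^] t = a [^] (m * (t div m) + t mod m)" by simp
  also have "\<dots> = (a [^] m) [^] (t div m) \<otimes> a [^] (t mod m)"
    by (simp only: nat_pow_pow[OF assms(1)] nat_pow_mult[OF assms(1)])
  also have "\<dots> = \<one> \<otimes> a [^] (t mod m)" using assms by simp
  also have "\<dots> = a [^] (t mod m)" using assms(1) by simp
  finally show ?thesis .
qed

lemma pow_eq_one_dvd:
  assumes "a \<in> carrier G" "a [^] (m::nat) = \<one>" "m > 0"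
    and ord: "\<forall>t. 0 < t \<and> t < m \<longrightarrow> a [^] t \<noteq> \<one>"
    and "a [^] (t::nat) = \<one>"
  shows "m dvd t"
proof -
  have "a [^] (t mod m) = \<one>" using pow_mod_m[OF assms(1,2), of t] assms(5) by simp
  then have "t mod m = 0"
  proof (rule contrapos_pp)
    assume "t mod m \<noteq> 0"
    then have "0 < t mod m \<and> t mod m < m" using assms(3) by simp
    then show "a [^] (t mod m) \<noteq> \<one>" using ord by blast
  qed
  then show ?thesis by auto
qed

lemma comm_generate:
  assumes "x \<in> carrier G" "A \<subseteq> carrier G" "\<forall>g\<in>A. x \<otimes> g = g \<otimes> x"
    and "g \<in> generate G A"
  shows "x \<otimes> g = g \<otimes> x"
  using assms(4)
proof (induction rule: generate.induct)
  case one then show ?case using assms by simp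
next
  case (incl h) then show ?case using assms by blast
next
  case (inv h)
  have hc: "h \<in> carrier G" using inv assms by blast
  have e: "x \<otimes> h = h \<otimes> x" using inv assms by blast
  have "inv h \<otimes> x = inv h \<otimes> x \<otimes> (h \<otimes> inv h)" using hc assms by (simp add: m_assoc)
  also have "\<dots> = inv h \<otimes> (x \<otimes> h) \<otimes> inv h" using hc assms by (simp add: m_assoc)
  also have "\<dots> = inv h \<otimes> (h \<otimes> x) \<otimes> inv h" using e by simp
  also have "\<dots> = x \<otimes> inv h" using hc assms by (simp add: m_assoc[symmetric])
  finally show ?case by simp
next
  case (eng h1 h2)
  have c: "h1 \<in> carrier G" "h2 \<in> carrier G"
    using eng.hyps generate_in_carrier assms(2) by blast+
  have "x \<otimes> (h1 \<otimes> h2) = (x \<otimes> h1) \<otimes> h2" using c assms by (simp add: m_assoc)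
  also have "\<dots> = h1 \<otimes> (x \<otimes> h2)" using c assms eng.IH by (simp add: m_assoc)
  also have "\<dots> = (h1 \<otimes> h2) \<otimes> x" using c assms eng.IH by (simp add: m_assoc)
  finally show ?case .
qed

lemma conj_rules:
  assumes ac: "a \<in> carrier G" and bc: "b \<in> carrier G"
    and am: "a [^] (m::nat) = \<one>" and kn: "[k ^ n = 1] (mod m)" and n0: "n > 0"
    and rel: "inv b \<otimes> a \<otimes> b = a [^] (k::nat)"
  shows "\<And>s. a [^] (s::nat) \<otimes> b = b \<otimes> a [^] (s * k)"
    and "\<And>s r. a [^] (s::nat) \<otimes> b [^] (r::nat) = b [^] r \<otimes> a [^] (s * k ^ r)"
    and "\<And>s r. b [^] (r::nat) \<otimes> a [^] (s::nat) = a [^] (s * (k ^ (n - 1)) ^ r) \<otimes> b [^] r"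
proof -
  have ab: "a \<otimes> b = b \<otimes> a [^] k"
  proof -
    have "b \<otimes> (inv b \<otimes> a \<otimes> b) = a \<otimes> b" using ac bc by (simp add: m_assoc[symmetric])
    then show ?thesis using rel by simp
  qed
  show 1: "a [^] (s::nat) \<otimes> b = b \<otimes> a [^] (s * k)" for s
  proof (induction s)
    case 0 then show ?case using bc by simp
  next
    case (Suc s)
    have "a [^] Suc s \<otimes> b = a [^] s \<otimes> (a \<otimes> b)" using ac bc by (simp add: m_assoc)
    also have "\<dots> = (a [^] s \<otimes> b) \<otimes> a [^] k" using ab ac bc by (simp add: m_assoc)
    also have "\<dots> = b \<otimes> (a [^] (s * k) \<otimes> a [^] k)" using Suc ac bc by (simp add: m_assoc)
    also have "\<dots> = b \<otimes> a [^] (Suc s * k)" using ac by (simp add: nat_pow_mult add.commute)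
    finally show ?case .
  qed
  show "a [^] (s::nat) \<otimes> b [^] (r::nat) = b [^] r \<otimes> a [^] (s * k ^ r)" for s r
  proof (induction r arbitrary: s)
    case 0 then show ?case using ac by simp
  next
    case (Suc r)
    have "a [^] s \<otimes> b [^] Suc r = (a [^] s \<otimes> b [^] r) \<otimes> b" using ac bc by (simp add: m_assoc)
    also have "\<dots> = b [^] r \<otimes> (a [^] (s * k ^ r) \<otimes> b)" using Suc ac bc by (simp add: m_assoc)
    also have "\<dots> = b [^] r \<otimes> (b \<otimes> a [^] (s * k ^ r * k))" using 1 by simp
    also have "\<dots> = b [^] Suc r \<otimes> a [^] (s * k ^ Suc r)" using ac bc
      by (simp add: m_assoc[symmetric] mult.assoc mult.commute[of k])
    finally show ?case .
  qed
  define c where "c = k ^ (n - 1)"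
  have ba: "b \<otimes> a = a [^] c \<otimes> b"
  proof -
    have "a [^] c \<otimes> b = b \<otimes> a [^] (c * k)" using 1 by simp
    also have "c * k = k ^ n" unfolding c_def using n0 power_Suc2[of k "n - 1"] by simp
    also have "a [^] (k ^ n) = a [^] (k ^ n mod m)" using pow_mod_m[OF ac am] by simp
    also have "k ^ n mod m = 1 mod m" using kn by (simp add: cong_def)
    also have "a [^] (1 mod m) = a [^] (1::nat)" using pow_mod_m[OF ac am, of 1] by simp
    finally show ?thesis using ac by simp
  qed
  have 3: "b \<otimes> a [^] (s::nat) = a [^] (s * c) \<otimes> b" for s
  proof (induction s)
    case 0 then show ?case using bc by simp
  next
    case (Suc s)
    have "b \<otimes> a [^] Suc s = (b \<otimes> a [^] s) \<otimes> a" using ac bc by (simp add: m_assoc)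
    also have "\<dots> = a [^] (s * c) \<otimes> (b \<otimes> a)" using Suc ac bc by (simp add: m_assoc)
    also have "\<dots> = a [^] (s * c) \<otimes> a [^] c \<otimes> b" using ba ac bc by (simp add: m_assoc)
    also have "\<dots> = a [^] (Suc s * c) \<otimes> b" using ac by (simp add: nat_pow_mult add.commute)
    finally show ?case .
  qed
  show "b [^] (r::nat) \<otimes> a [^] (s::nat) = a [^] (s * (k ^ (n - 1)) ^ r) \<otimes> b [^] r" for s r
  proof (induction r arbitrary: s)
    case 0 then show ?case using ac by simp
  next
    case (Suc r)
    have "b [^] Suc r \<otimes> a [^] s = b [^] r \<otimes> (b \<otimes> a [^] s)"
      using ac bc by (simp add: m_assoc nat_pow_Suc2)
    also have "\<dots> = (b [^] r \<otimes> a [^] (s * c)) \<otimes> b" using 3 ac bc by (simp add: m_assoc)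
    also have "\<dots> = a [^] (s * c * c ^ r) \<otimes> (b [^] r \<otimes> b)"
      using Suc ac bc by (simp add: m_assoc c_def)
    also have "\<dots> = a [^] (s * c ^ Suc r) \<otimes> b [^] Suc r"
      by (simp add: mult.assoc)
    finally show ?case by (simp add: c_def)
  qed
qed

lemma nf:
  assumes ac: "a \<in> carrier G" and bc: "b \<in> carrier G"
    and am: "a [^] (m::nat) = \<one>" and kn: "[k ^ n = 1] (mod m)" and n0: "n > 0"
    and rel: "inv b \<otimes> a \<otimes> b = a [^] (k::nat)"
    and bn: "b [^] n = a [^] (l::nat)" and m0: "m > 0"
    and gen: "carrier G = generate G {a, b}" and gc: "g \<in> carrier G"
  shows "\<exists>i j. g = a [^] (i::nat) \<otimes> b [^] (j::nat)"
proof -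
  define S where "S = {g. \<exists>i j. g = a [^] (i::nat) \<otimes> b [^] (j::nat)}"
  have mc: "x \<otimes> y \<in> S" if xs: "x \<in> S" and ys: "y \<in> S" for x y
  proof -
    obtain i1 j1 i2 j2 where x: "x = a [^] (i1::nat) \<otimes> b [^] (j1::nat)"
      and y: "y = a [^] (i2::nat) \<otimes> b [^] (j2::nat)" using xs ys unfolding S_def by blast
    have "x \<otimes> y = a [^] i1 \<otimes> (b [^] j1 \<otimes> a [^] i2) \<otimes> b [^] j2"
      unfolding x y using ac bc by (simp add: m_assoc)
    also have "\<dots> = a [^] i1 \<otimes> (a [^] (i2 * (k ^ (n - 1)) ^ j1) \<otimes> b [^] j1) \<otimes> b [^] j2"
      using conj_rules(3)[OF ac bc am kn n0 rel] by simp
    also have "\<dots> = a [^] (i1 + i2 * (k ^ (n - 1)) ^ j1) \<otimes> b [^] (j1 + j2)"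
      using ac bc by (simp add: m_assoc nat_pow_mult[symmetric])
    finally show ?thesis unfolding S_def by blast
  qed
  have aS: "a \<in> S" unfolding S_def using ac by (intro CollectI exI[of _ 1] exI[of _ 0]) simp
  have bS: "b \<in> S" unfolding S_def using bc by (intro CollectI exI[of _ 0] exI[of _ 1]) simp
  have iaS: "inv a \<in> S"
  proof -
    have "a [^] (m - 1) \<otimes> a = \<one>" using am m0 ac nat_pow_Suc[of a "m - 1"] by simp
    then have "inv a = a [^] (m - 1) \<otimes> b [^] (0::nat)" using ac by (simp add: inv_equality)
    then show ?thesis unfolding S_def by blast
  qed
  have ibS: "inv b \<in> S"
  proof -
    have bn1: "b [^] (n - 1) \<otimes> b = b [^] n" using n0 nat_pow_Suc[of b "n - 1"] by simp
    have "a [^] ((m - 1) * l) \<otimes> b [^] (n - 1) \<otimes> b = a [^] ((m - 1) * l) \<otimes> b [^] n"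
      using ac bc bn1 by (simp add: m_assoc)
    also have "\<dots> = a [^] ((m - 1) * l + l)" using bn ac by (simp add: nat_pow_mult)
    also have "(m - 1) * l + l = m * l" using m0 by (cases m) auto
    also have "a [^] (m * l) = \<one>" using am ac by (simp add: nat_pow_pow[symmetric])
    finally have "inv b = a [^] ((m - 1) * l) \<otimes> b [^] (n - 1)" using ac bc by (simp add: inv_equality)
    then show ?thesis unfolding S_def by blast
  qed
  have "g \<in> generate G {a, b}" using gc gen by simp
  then have "g \<in> S"
  proof (induction rule: generate.induct)
    case one then show ?case unfolding S_def by (intro CollectI exI[of _ 0] exI[of _ 0]) simp
  next
    case (incl h) then show ?case using aS bS by blast
  next
    case (inv h) then show ?case using iaS ibS by blast
  next
    case (eng h1 h2) then show ?case using mc by blast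
  qed
  then show ?thesis unfolding S_def by blast
qed

lemma center_triv:
  assumes ac: "a \<in> carrier G" and bc: "b \<in> carrier G"
    and am: "a [^] (m::nat) = \<one>" and kn: "[k ^ n = 1] (mod m)" and n0: "n > 0"
    and rel: "inv b \<otimes> a \<otimes> b = a [^] (k::nat)"
    and bn: "b [^] n = a [^] (l::nat)" and m0: "m > 0"
    and gen: "carrier G = generate G {a, b}"
    and ord: "\<forall>t. 0 < t \<and> t < m \<longrightarrow> a [^] t \<noteq> \<one>"
    and k0: "k > 0" and cop: "coprime (k - 1) m"
    and indmin: "\<forall>r. 0 < r \<and> r < n \<longrightarrow> \<not> [k ^ r = 1] (mod m)"
    and zc: "z \<in> carrier G" and za: "z \<otimes> a = a \<otimes> z" and zb: "z \<otimes> b = b \<otimes> z"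
  shows "z = \<one>"
proof -
  obtain i j where z0: "z = a [^] (i::nat) \<otimes> b [^] (j::nat)"
    using nf[OF ac bc am kn n0 rel bn m0 gen zc] by blast
  define r where "r = j mod n"
  define s where "s = i + l * (j div n)"
  have "b [^] j = b [^] (n * (j div n) + r)" unfolding r_def by simp
  also have "\<dots> = (b [^] n) [^] (j div n) \<otimes> b [^] r" using bc by (simp add: nat_pow_mult nat_pow_pow)
  also have "\<dots> = a [^] (l * (j div n)) \<otimes> b [^] r" using bn ac by (simp add: nat_pow_pow)
  finally have "z = a [^] s \<otimes> b [^] r" unfolding z0 s_def using ac bc
    by (simp add: m_assoc[symmetric] nat_pow_mult)
  note z = this
  have rn: "r < n" unfolding r_def using n0 by simp
  have bb: "b \<otimes> b [^] r = b [^] r \<otimes> b" using bc nat_pow_Suc[of b r] nat_pow_Suc2[of b r] by simp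
  have "b \<otimes> a [^] (s * k) \<otimes> b [^] r = a [^] s \<otimes> b \<otimes> b [^] r"
    using conj_rules(1)[OF ac bc am kn n0 rel, of s] by simp
  also have "\<dots> = z \<otimes> b" unfolding z using ac bc bb by (simp add: m_assoc)
  also have "\<dots> = b \<otimes> z" by (rule zb)
  also have "\<dots> = b \<otimes> a [^] s \<otimes> b [^] r" unfolding z using ac bc by (simp add: m_assoc)
  finally have F: "b \<otimes> a [^] (s * k) \<otimes> b [^] r = b \<otimes> a [^] s \<otimes> b [^] r" .
  then have "b \<otimes> (a [^] (s * k) \<otimes> b [^] r) = b \<otimes> (a [^] s \<otimes> b [^] r)"
    using ac bc by (simp only: m_assoc nat_pow_closed)
  then have "a [^] (s * k) \<otimes> b [^] r = a [^] s \<otimes> b [^] r"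
    using ac bc by simp
  then have ask: "a [^] (s * k) = a [^] s"
    using ac bc by simp
  have sk: "s * k = s + s * (k - 1)" using k0 by (cases k) auto
  have "a [^] s \<otimes> a [^] (s * (k - 1)) = a [^] (s * k)"
    using ac unfolding sk by (rule nat_pow_mult)
  then have "a [^] s \<otimes> a [^] (s * (k - 1)) = a [^] s \<otimes> \<one>" using ask ac by simp
  then have "a [^] (s * (k - 1)) = \<one>"
    using ac by simp
  then have "m dvd s * (k - 1)" using pow_eq_one_dvd[OF ac am m0 ord] by blast
  moreover have "coprime m (k - 1)" using cop by (simp add: coprime_commute)
  ultimately have "m dvd s" using coprime_dvd_mult_left_iff by blast
  then have "a [^] s = \<one>" using pow_mod_m[OF ac am, of s] by simp
  then have zr: "z = b [^] r" using z bc by simp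
  have "b [^] r \<otimes> a [^] (1 * k ^ r) = a [^] (1::nat) \<otimes> b [^] r"
    using conj_rules(2)[OF ac bc am kn n0 rel, of 1 r] by simp
  also have "\<dots> = b [^] r \<otimes> a [^] (1::nat)" using za zr ac by simp
  finally have e: "a [^] (k ^ r) = a [^] (1::nat)" using ac bc by simp
  have kr: "k ^ r \<ge> 1" using k0 by simp
  have kr1: "1 + (k ^ r - 1) = k ^ r" using kr by simp
  have "a [^] (1::nat) \<otimes> a [^] (k ^ r - 1) = a [^] (k ^ r)"
    using nat_pow_mult[OF ac, of 1 "k ^ r - 1"] unfolding kr1 .
  then have "a [^] (1::nat) \<otimes> a [^] (k ^ r - 1) = a [^] (1::nat) \<otimes> \<one>" using e ac by simp
  then have "a [^] (k ^ r - 1) = \<one>" using ac by simp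
  then have "m dvd k ^ r - 1" using pow_eq_one_dvd[OF ac am m0 ord] by blast
  then have krc: "[k ^ r = 1] (mod m)" by (rule iffD2[OF cong_altdef_nat[OF kr]])
  have "r = 0"
  proof (rule ccontr)
    assume "r \<noteq> 0"
    then have "0 < r \<and> r < n" using rn by simp
    then have "\<not> [k ^ r = 1] (mod m)" by (rule indmin[rule_format])
    then show False using krc by (rule notE)
  qed
  then show ?thesis using zr by simp
qed

lemma center_nontriv:
  assumes ac: "a \<in> carrier G" and bc: "b \<in> carrier G"
    and am: "a [^] (m::nat) = \<one>" and kn: "[k ^ n = 1] (mod m)" and n0: "n > 0"
    and rel: "inv b \<otimes> a \<otimes> b = a [^] (k::nat)" and m0: "m > 0"
    and gen: "carrier G = generate G {a, b}"
    and ord: "\<forall>t. 0 < t \<and> t < m \<longrightarrow> a [^] t \<noteq> \<one>"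
    and k0: "k > 0" and ncop: "\<not> coprime (k - 1) m"
  shows "\<exists>z\<in>carrier G. z \<noteq> \<one> \<and> (\<forall>g\<in>carrier G. z \<otimes> g = g \<otimes> z)"
proof -
  define d where "d = gcd (k - 1) m"
  have d1: "d \<noteq> 1" using ncop unfolding d_def by (simp add: coprime_iff_gcd_eq_1)
  have d0: "d > 0" using m0 unfolding d_def by simp
  have dm: "d dvd m" "d dvd k - 1" unfolding d_def by auto
  define t where "t = m div d"
  have tm: "t * d = m" unfolding t_def using dm by simp
  have t0: "0 < t" using tm m0 by (cases t) auto
  have d2: "1 < d" using d0 d1 by simp
  have "t * 1 < t * d" using t0 d2 by (intro mult_less_mono2) auto
  then have tlt: "t < m" using tm by simp
  obtain e where e: "k - 1 = d * e" using dm by blast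
  have zne: "a [^] t \<noteq> \<one>" using ord t0 tlt by blast
  have kk: "k = Suc (d * e)" using e k0 by simp
  have "t * k = t + (t * d) * e" unfolding kk by (simp add: algebra_simps)
  then have tk: "t * k = t + m * e" using tm by simp
  have "a [^] (t * k) = a [^] t \<otimes> (a [^] m) [^] e" using ac
    by (simp add: tk nat_pow_mult nat_pow_pow)
  then have "a [^] (t * k) = a [^] t" using ac am by simp
  then have zb: "a [^] t \<otimes> b = b \<otimes> a [^] t"
    using conj_rules(1)[OF ac bc am kn n0 rel, of t] by simp
  have za: "a [^] t \<otimes> a = a \<otimes> a [^] t" using ac nat_pow_Suc[of a t] nat_pow_Suc2[of a t] by simp
  have atc: "a [^] t \<in> carrier G" using ac by simp
  have "\<forall>g\<in>carrier G. a [^] t \<otimes> g = g \<otimes> a [^] t"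
  proof
    fix g assume "g \<in> carrier G"
    then have H2: "g \<in> generate G {a, b}" using gen by simp
    have H1: "\<forall>g\<in>{a, b}. a [^] t \<otimes> g = g \<otimes> a [^] t" using za zb by simp
    have sub: "{a, b} \<subseteq> carrier G" using ac bc by simp
    show "a [^] t \<otimes> g = g \<otimes> a [^] t" by (rule comm_generate[OF atc sub H1 H2])
  qed
  then show ?thesis using zne ac by blast
qed

end


theorem lemma2p4:
  fixes k l m n :: nat and G :: "('g, 'c) monoid_scheme" and a b :: 'g
  assumes "k > 0" "l > 0" "m > 0" "n > 0"
    and "[k ^ n = 1] (mod m)"
    and "[l * (k - 1) = 0] (mod m)"
    and "presents_mc G a b k l m n"
  defines "R \<equiv> {(int k ^ j - 1) mod int m | j. j < n}"
    and "L \<equiv> {(1 - int k ^ j) mod int m | j. j < n}"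
  shows "(0 \<in> R \<and> 0 \<in> L) \<and>
         (n = ind m k \<longrightarrow>
           ((center G = {\<one>\<^bsub>G\<^esub>} \<longleftrightarrow> (\<exists>r \<in> R. coprime r (int m))) \<and>
            ((\<exists>r \<in> R. coprime r (int m)) \<longleftrightarrow> (\<exists>r \<in> L. coprime r (int m)))))"
proof -
  have grp: "group G" and rels: "mc_rels G a b k l m n" and gen: "carrier G = generate G {a, b}"
    and univ: "\<forall>(H :: nat monoid) x y. group H \<and> mc_rels H x y k l m n \<longrightarrow>
        (\<exists>h \<in> hom G H. h a = x \<and> h b = y)"
    using assms(7) unfolding presents_mc_def by blast+
  interpret G: group G by (fact grp)
  have ac: "a \<in> carrier G" and bc: "b \<in> carrier G" and am: "a [^]\<^bsub>G\<^esub> m = \<one>\<^bsub>G\<^esub>"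
    and bn: "b [^]\<^bsub>G\<^esub> n = a [^]\<^bsub>G\<^esub> l"
    and rel: "inv\<^bsub>G\<^esub> b \<otimes>\<^bsub>G\<^esub> a \<otimes>\<^bsub>G\<^esub> b = a [^]\<^bsub>G\<^esub> k"
    using rels unfolding mc_rels_def by blast+
  have lk: "[l * k = l] (mod m)"
  proof -
    have "l * k = l * (k - 1) + l" using assms(1) by (cases k) auto
    moreover have "[l * (k - 1) + l = 0 + l] (mod m)" using assms(6) by (intro cong_add) auto
    ultimately show ?thesis by simp
  qed
  define x where "x = prod_encode (0, 1 mod m)"
  define y where "y = prod_encode (if n = 1 then (0, l mod m) else (1, 0))"
  have Hm: "group (Hgrp k l m n) \<and> mc_rels (Hgrp k l m n) x y k l m n \<and>
         (\<forall>t. 0 < t \<and> t < m \<longrightarrow> x [^]\<^bsub>Hgrp k l m n\<^esub> t \<noteq> \<one>\<^bsub>Hgrp k l m n\<^esub>)"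
    unfolding x_def y_def by (rule H_model[OF assms(4) assms(3) assms(5) lk])
  then obtain h where h: "h \<in> hom G (Hgrp k l m n)" "h a = x" using univ by blast
  have ord: "\<forall>t. 0 < t \<and> t < m \<longrightarrow> a [^]\<^bsub>G\<^esub> t \<noteq> \<one>\<^bsub>G\<^esub>"
  proof (intro allI impI)
    fix t :: nat assume t: "0 < t \<and> t < m"
    show "a [^]\<^bsub>G\<^esub> t \<noteq> \<one>\<^bsub>G\<^esub>"
    proof
      assume "a [^]\<^bsub>G\<^esub> t = \<one>\<^bsub>G\<^esub>"
      then have "h (a [^]\<^bsub>G\<^esub> t) = \<one>\<^bsub>Hgrp k l m n\<^esub>" using hom_one[OF h(1) grp] Hm by simp
      moreover have "h (a [^]\<^bsub>G\<^esub> t) = x [^]\<^bsub>Hgrp k l m n\<^esub> t"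
        using hom_nat_pow[OF h(1) ac grp] Hm h(2) by simp
      ultimately show False using Hm t by simp
    qed
  qed
  have part1: "0 \<in> R \<and> 0 \<in> L" unfolding R_def L_def using assms(4) by force
  have m0: "int m \<noteq> 0" using assms(3) by simp
  have km1: "int k - 1 = int (k - 1)" using assms(1) by simp
  have Req: "(\<exists>r\<in>R. coprime r (int m)) \<longleftrightarrow> coprime (k - 1) m"
  proof
    assume "\<exists>r\<in>R. coprime r (int m)"
    then obtain j where "coprime ((int k ^ j - 1) mod int m) (int m)" unfolding R_def by blast
    then have c: "coprime (int k ^ j - 1) (int m)" using m0 by simp
    have "int k ^ j - 1 = (int k - 1) * (\<Sum>i<j. int k ^ i)" by (rule power_diff_1_eq)
    then have "int k - 1 dvd int k ^ j - 1" by simp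
    then have "coprime (int k - 1) (int m)" using c coprime_divisors[of "int k - 1" "int k ^ j - 1" "int m" "int m"] by simp
    then show "coprime (k - 1) m" unfolding km1 by simp
  next
    assume c: "coprime (k - 1) m"
    have "[k ^ (1 mod n) = k ^ 1] (mod m)" by (rule kpow_mod[OF assms(5)])
    then have "[int k ^ (1 mod n) = int k] (mod int m)"
      using cong_int_iff[of "k ^ (1 mod n)" k m] by simp
    then have "int k ^ (1 mod n) mod int m = int k mod int m" by (simp add: cong_def)
    then have e: "(int k ^ (1 mod n) - 1) mod int m = (int k - 1) mod int m"
      by (metis mod_diff_left_eq)
    have "coprime ((int k - 1) mod int m) (int m)" using c m0 unfolding km1 by simp
    moreover have "(int k ^ (1 mod n) - 1) mod int m \<in> R"
    proof -
      have "1 mod n < n" using assms(4) by simp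
      then show ?thesis unfolding R_def by blast
    qed
    ultimately show "\<exists>r\<in>R. coprime r (int m)" using e by auto
  qed
  have each: "coprime ((1 - int k ^ j) mod int m) (int m) \<longleftrightarrow> coprime ((int k ^ j - 1) mod int m) (int m)" for j
  proof -
    have e: "1 - int k ^ j = - (int k ^ j - 1)" by simp
    have "coprime ((1 - int k ^ j) mod int m) (int m) \<longleftrightarrow> coprime (1 - int k ^ j) (int m)"
      by (rule coprime_mod_left_iff[OF m0])
    also have "\<dots> \<longleftrightarrow> coprime (int k ^ j - 1) (int m)"
      unfolding e by (rule coprime_minus_left_iff)
    also have "\<dots> \<longleftrightarrow> coprime ((int k ^ j - 1) mod int m) (int m)"
      by (rule coprime_mod_left_iff[OF m0, symmetric])
    finally show ?thesis .
  qed
  have LR: "(\<exists>r\<in>R. coprime r (int m)) \<longleftrightarrow> (\<exists>r\<in>L. coprime r (int m))"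
  proof
    assume "\<exists>r\<in>R. coprime r (int m)"
    then obtain j where j: "j < n" "coprime ((int k ^ j - 1) mod int m) (int m)"
      unfolding R_def by blast
    have "(1 - int k ^ j) mod int m \<in> L" unfolding L_def using j(1) by blast
    moreover have "coprime ((1 - int k ^ j) mod int m) (int m)" using j(2) each by simp
    ultimately show "\<exists>r\<in>L. coprime r (int m)" by blast
  next
    assume "\<exists>r\<in>L. coprime r (int m)"
    then obtain j where j: "j < n" "coprime ((1 - int k ^ j) mod int m) (int m)"
      unfolding L_def by blast
    have "(int k ^ j - 1) mod int m \<in> R" unfolding R_def using j(1) by blast
    moreover have "coprime ((int k ^ j - 1) mod int m) (int m)" using j(2) each by simp
    ultimately show "\<exists>r\<in>R. coprime r (int m)" by blast
  qed
  have C: "center G = {\<one>\<^bsub>G\<^esub>} \<longleftrightarrow> coprime (k - 1) m" if nind: "n = ind m k"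
  proof
    assume cen: "center G = {\<one>\<^bsub>G\<^esub>}"
    show "coprime (k - 1) m"
    proof (rule ccontr)
      assume "\<not> coprime (k - 1) m"
      then obtain z where z: "z \<in> carrier G" "z \<noteq> \<one>\<^bsub>G\<^esub>" "\<forall>g\<in>carrier G. z \<otimes>\<^bsub>G\<^esub> g = g \<otimes>\<^bsub>G\<^esub> z"
        using G.center_nontriv[OF ac bc am assms(5) assms(4) rel assms(3) gen ord assms(1)] by blast
      then have "z \<in> center G" unfolding center_def by blast
      then show False using cen z(2) by simp
    qed
  next
    assume cop: "coprime (k - 1) m"
    have indmin: "\<forall>r. 0 < r \<and> r < n \<longrightarrow> \<not> [k ^ r = 1] (mod m)"
      using nind unfolding ind_def by (metis (mono_tags, lifting) not_less_Least)
    show "center G = {\<one>\<^bsub>G\<^esub>}"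
    proof
      show "center G \<subseteq> {\<one>\<^bsub>G\<^esub>}"
      proof
        fix z assume "z \<in> center G"
        then have zc: "z \<in> carrier G" and zg: "\<forall>g\<in>carrier G. z \<otimes>\<^bsub>G\<^esub> g = g \<otimes>\<^bsub>G\<^esub> z"
          unfolding center_def by blast+
        have "z = \<one>\<^bsub>G\<^esub>"
          using G.center_triv[OF ac bc am assms(5) assms(4) rel bn assms(3) gen ord assms(1) cop indmin zc]
            zg ac bc by blast
        then show "z \<in> {\<one>\<^bsub>G\<^esub>}" by simp
      qed
      show "{\<one>\<^bsub>G\<^esub>} \<subseteq> center G" unfolding center_def by auto
    qed
  qed
  show ?thesis
  proof (intro conjI impI)
    show "0 \<in> R" using part1 by (rule conjunct1)
    show "0 \<in> L" using part1 by (rule conjunct2)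
    show "center G = {\<one>\<^bsub>G\<^esub>} \<longleftrightarrow> (\<exists>r \<in> R. coprime r (int m))" if "n = ind m k"
      unfolding C[OF that] Req by (rule refl)
    show "(\<exists>r \<in> R. coprime r (int m)) \<longleftrightarrow> (\<exists>r \<in> L. coprime r (int m))" if "n = ind m k"
      by (rule LR)
  qed
qed

end
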